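(* Let $1\le m<n$, let $h\in\mathbb{R}[x_1,\ldots,x_n]$, and let $\boldsymbol{\ell}\in\mathbb{R}^{n\times m}$, $\mathbf{s}\in\mathbb{R}^{n\times(n-m)}$ be such that $[\boldsymbol{\ell},\mathbf{s}]$ is an orthogonal $n\times n$ matrix. Let $\theta_1,\ldots,\theta_r>0$ and $\mathbf{v}_1,\ldots,\mathbf{v}_r\in\mathcal{E}_{n-m}$. Define, for $\mathbf{x}\in\mathcal{E}_n$, \[ \hat h(\mathbf{x}):=\sum_{j=1}^r\theta_j\,h\big(\boldsymbol{\ell}\boldsymbol{\ell}^T\mathbf{x}+(1-\|\boldsymbol{\ell}^T\mathbf{x}\|^2)^{1/2}\,\mathbf{s}\mathbf{v}_j\big), \] and the polynomial $\hat f\in\mathbb{R}[X_1,\ldots,X_m,Y]$ by \[ \hat f(X,Y):=\sum_{j=1}^r\theta_j\,h\big(\boldsymbol{\ell}X+Y\,\mathbf{s}\mathbf{v}_j\big),\qquad (X,Y)\in\mathbb{R}^m\times\mathbb{R}. \] Let \[ \rho^+:=\min\{\hat f(X,Y):(X,Y)\in\mathbb{S}^m,\ Y\ge0\},\qquad \rho^-:=\min\{\hat f(X,-Y):(X,Y)\in\mathbb{S}^m,\ Y\le0\}, \] and $\rho:=\min[\rho^+,\rho^-]$ (so that $\rho=\min\{\hat f(X,|Y|):(X,Y)\in\mathbb{S}^m\}$). Then \[ \min\{\hat h(\mathbf{x}):\mathbf{x}\in\mathbb{S}^{n-1}\}=\min\{\hat h(\mathbf{x}):\mathbf{x}\in\mathcal{E}_n\}=\rho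 . \]
   Context: $\mathcal{E}_k=\{\mathbf{x}\in\mathbb{R}^k:\|\mathbf{x}\|\le1\}$ is the closed Euclidean unit ball and $\mathbb{S}^{k-1}=\{\mathbf{x}\in\mathbb{R}^k:\|\mathbf{x}\|=1\}$ the unit sphere of $\mathbb{R}^k$ (so $\mathbb{S}^m\subset\mathbb{R}^{m+1}$). In the paper, the columns of $\boldsymbol{\ell}$ and $\mathbf{s}$ are orthonormal eigenvectors of $\mathrm{E}_{\mu_n}[\nabla h\nabla h^T]$ ($\mu_n$ the uniform probability on $\mathcal{E}_n$) associated with the $m$ largest, resp. the remaining $n-m$, eigenvalues, and $(\theta_j,\mathbf{v}_j)$ is a cubature rule on $\mathcal{E}_{n-m}$ exact for the degree of $h$; only the orthogonality of $[\boldsymbol{\ell},\mathbf{s}]$ and $\theta_j>0$, $\mathbf{v}_j\in\mathcal{E}_{n-m}$ are used in the statement. *)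

theory Defs
  imports "HOL-Analysis.Analysis"
begin

text \<open>Over the reals this is exactly
  the set of evaluation maps of elements of R[x_1,...,x_n].\<close>
inductive real_poly_fun :: "(real ^ 'n \<Rightarrow> real) \<Rightarrow> bool" where
  const: "real_poly_fun (\<lambda>x. c)"
| coord: "real_poly_fun (\<lambda>x. x $ i)"
| add: "real_poly_fun p \<Longrightarrow> real_poly_fun q \<Longrightarrow> real_poly_fun (\<lambda>x. p x + q x)"
| mult: "real_poly_fun p \<Longrightarrow> real_poly_fun q \<Longrightarrow> real_poly_fun (\<lambda>x. p x * q x)"

text \<open>The n x n matrix [l, s] with n = m + (n-m), rows and columns indexed by 'm + 'k.\<close>
definition block_cols :: "real ^ 'm ^ ('m + 'k) \<Rightarrow> real ^ 'k ^ ('m + 'k) \<Rightarrow> real ^ ('m + 'k) ^ ('m + 'k)" where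
  "block_cols l s = (\<chi> i j. case j of Inl a \<Rightarrow> l $ i $ a | Inr b \<Rightarrow> s $ i $ b)"

end

theory Submission
  imports Defs
begin

lemma sum_Plus_UNIV: "sum (f :: ('a::finite + 'b::finite) \<Rightarrow> real) UNIV = (\<Sum>a\<in>UNIV. f (Inl a)) + (\<Sum>b\<in>UNIV. f (Inr b))"
proof -
  have U: "UNIV = range Inl \<union> (range Inr :: ('a+'b) set)"
  proof (rule set_eqI)
    fix x :: "'a+'b" show "x \<in> UNIV \<longleftrightarrow> x \<in> range Inl \<union> range Inr" by (cases x) auto
  qed
  have "sum f UNIV = sum f (range Inl) + sum f (range Inr)"
    unfolding U by (rule sum.union_disjoint) auto
  also have "\<dots> = (\<Sum>a\<in>UNIV. f (Inl a)) + (\<Sum>b\<in>UNIV. f (Inr b))"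
    by (simp add: sum.reindex)
  finally show ?thesis .
qed

lemma poly_cont: "real_poly_fun h \<Longrightarrow> continuous_on UNIV h"
  by (induction rule: real_poly_fun.induct) (auto intro!: continuous_intros)

lemma orth_norm: "orthogonal_matrix (A::real^'n^'n) \<Longrightarrow> norm (A *v x) = norm x"
  by (metis orthogonal_transformation_matrix orthogonal_transformation_norm matrix_of_matrix_vector_mul matrix_vector_mul_linear)

definition join :: "real^'m \<Rightarrow> real^'k \<Rightarrow> real^('m+'k)" where
  "join X W = (\<chi> i. case i of Inl a \<Rightarrow> X$a | Inr b \<Rightarrow> W$b)"

lemma tQ: "transpose (block_cols l s) *v x = join (transpose l *v x) (transpose s *v x)"
  by (simp add: vec_eq_iff join_def matrix_vector_mult_def transpose_def block_cols_def split: sum.split)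

lemma Qj: "block_cols l s *v join X W = l *v X + s *v W"
  by (simp add: vec_eq_iff join_def matrix_vector_mult_def block_cols_def sum_Plus_UNIV)

lemma norm_join: "(norm (join X W))\<^sup>2 = (norm X)\<^sup>2 + (norm W)\<^sup>2"
  by (simp add: norm_vec_def L2_set_def join_def sum_Plus_UNIV real_sqrt_pow2 sum_nonneg)

theorem mainTheorem5:
  fixes h :: "real ^ ('m::finite + 'k::finite) \<Rightarrow> real"
    and l :: "real ^ 'm ^ ('m + 'k)"
    and s :: "real ^ 'k ^ ('m + 'k)"
    and r :: nat
    and \<theta> :: "nat \<Rightarrow> real"
    and v :: "nat \<Rightarrow> real ^ 'k"
    and hhat :: "real ^ ('m + 'k) \<Rightarrow> real"
    and fhat :: "real ^ 'm \<Rightarrow> real \<Rightarrow> real"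
    and \<rho>p \<rho>m \<rho> :: real
  assumes hpoly: "real_poly_fun h"
    and orth: "orthogonal_matrix (block_cols l s)"
    and \<theta>pos: "\<And>j. j \<in> {1..r} \<Longrightarrow> \<theta> j > 0"
    and vball: "\<And>j. j \<in> {1..r} \<Longrightarrow> v j \<in> cball 0 1"
    and hhat_def: "hhat =  (\<lambda>x. \<Sum>j=1..r. \<theta> j * h (l *v (transpose l *v x)
                     + sqrt (1 - (norm (transpose l *v x))\<^sup>2) *\<^sub>R (s *v v j)))"
    and fhat_def: "fhat =  (\<lambda>X Y. \<Sum>j=1..r. \<theta> j * h (l *v X + Y *\<^sub>R (s *v v j)))"
    and \<rho>p_def: "\<rho>p =  Inf {fhat X Y | X Y. (X, Y) \<in> sphere (0 :: (real ^ 'm) \<times> real) 1 \<and> Y \<ge> 0}"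
    and \<rho>m_def: "\<rho>m =  Inf {fhat X (- Y) | X Y. (X, Y) \<in> sphere (0 :: (real ^ 'm) \<times> real) 1 \<and> Y \<le> 0}"
    and \<rho>_def: "\<rho> =  min \<rho>p \<rho>m"
  shows "(\<exists>x\<in>sphere 0 1. hhat x = \<rho>) \<and> (\<forall>x\<in>sphere 0 1. \<rho> \<le> hhat x)
       \<and> (\<exists>x\<in>cball 0 1. hhat x = \<rho>) \<and> (\<forall>x\<in>cball 0 1. \<rho> \<le> hhat x)"
proof -
  let ?Q = "block_cols l s"
  define S where "S = {p \<in> sphere (0::(real^'m)\<times>real) 1. snd p \<ge> 0}"
  define g where "g p = fhat (fst p) (snd p)" for p
  have setp: "{fhat X Y | X Y. (X, Y) \<in> sphere (0 :: (real ^ 'm) \<times> real) 1 \<and> Y \<ge> 0} = g ` S"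
    unfolding S_def g_def by (auto simp: image_iff) blast+
  have setm: "{fhat X (- Y) | X Y. (X, Y) \<in> sphere (0 :: (real ^ 'm) \<times> real) 1 \<and> Y \<le> 0} = g ` S"
  proof (intro set_eqI iffI)
    fix z assume "z \<in> {fhat X (- Y) | X Y. (X, Y) \<in> sphere (0 :: (real ^ 'm) \<times> real) 1 \<and> Y \<le> 0}"
    then obtain X Y where "z = fhat X (-Y)" "(X,Y) \<in> sphere 0 1" "Y \<le> 0" by blast
    moreover have "norm (X, -Y) = norm (X,Y)" by (simp add: norm_Pair)
    ultimately show "z \<in> g ` S" unfolding S_def g_def
      by (auto simp: image_iff intro!: exI[of _ X] exI[of _ "-Y"])
  next
    fix z assume "z \<in> g ` S"
    then obtain X Y where "z = fhat X Y" "(X,Y) \<in> sphere 0 1" "Y \<ge> 0" unfolding S_def g_def by auto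
    moreover have "norm (X, -Y) = norm (X,Y)" by (simp add: norm_Pair)
    ultimately show "z \<in> {fhat X (- Y) | X Y. (X, Y) \<in> sphere (0 :: (real ^ 'm) \<times> real) 1 \<and> Y \<le> 0}"
      by (intro CollectI exI[of _ X] exI[of _ "-Y"]) auto
  qed
  have cS: "compact S"
  proof -
    have "S = sphere 0 1 \<inter> {p. snd p \<ge> 0}" unfolding S_def by auto
    moreover have "closed {p::(real^'m)\<times>real. snd p \<ge> 0}"
      by (rule closed_Collect_le) (auto intro!: continuous_intros)
    ultimately show ?thesis by (simp add: compact_Int_closed)
  qed
  have neS: "S \<noteq> {}"
  proof -
    have "(0, 1) \<in> S" unfolding S_def by (simp add: norm_Pair)
    thus ?thesis by blast
  qed
  have hc: "continuous_on UNIV h" using hpoly by (rule poly_cont)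
  have gc: "continuous_on S g"
    unfolding g_def fhat_def
    by (intro continuous_intros continuous_on_compose2[OF hc] continuous_on_compose2[OF matrix_vector_mult_linear_continuous_on[of UNIV]]) auto
  obtain p0 where p0: "p0 \<in> S" "\<And>p. p \<in> S \<Longrightarrow> g p0 \<le> g p"
    using continuous_attains_inf[OF cS neS gc] by blast
  have rho: "\<rho> = g p0"
  proof -
    have "Inf (g ` S) = g p0" by (rule cInf_eq_minimum) (use p0 in auto)
    thus ?thesis unfolding \<rho>_def \<rho>p_def \<rho>m_def setp setm by simp
  qed
  have oQ: "orthogonal_matrix ?Q" by (rule orth)
  have C: "\<exists>p\<in>S. hhat x = g p" if "x \<in> cball 0 1" for x
  proof -
    let ?X = "transpose l *v x"
    have "(norm ?X)\<^sup>2 \<le> (norm (transpose ?Q *v x))\<^sup>2"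
      unfolding tQ norm_join by simp
    also have "\<dots> = (norm x)\<^sup>2" using orth_norm[of "transpose ?Q" x] oQ by simp
    also have "\<dots> \<le> 1" using that by (simp add: power_le_one)
    finally have le: "(norm ?X)\<^sup>2 \<le> 1" .
    let ?Y = "sqrt (1 - (norm ?X)\<^sup>2)"
    have "norm (?X, ?Y) = 1" using le by (simp add: norm_Pair)
    hence "(?X, ?Y) \<in> S" using le unfolding S_def by simp
    moreover have "hhat x = g (?X, ?Y)" unfolding hhat_def g_def fhat_def by simp
    ultimately show ?thesis by blast
  qed
  obtain X Y where XY: "p0 = (X,Y)" by (cases p0)
  have Y0: "Y \<ge> 0" and nXY: "(norm X)\<^sup>2 + Y\<^sup>2 = 1"
    using p0(1) unfolding S_def XY by (auto simp: norm_Pair)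
  obtain b :: 'k where True by blast
  define e where "e = (axis b 1 :: real^'k)"
  have ne: "norm e = 1" unfolding e_def by simp
  define x where "x = ?Q *v join X (Y *\<^sub>R e)"
  have x_eq: "x = l *v X + Y *\<^sub>R (s *v e)" unfolding x_def Qj
    by (simp add: matrix_vector_mult_scaleR)
  have "norm x = norm (join X (Y *\<^sub>R e))" unfolding x_def using oQ by (simp add: orth_norm)
  hence "(norm x)\<^sup>2 = (norm X)\<^sup>2 + Y\<^sup>2" by (simp add: norm_join ne power_mult_distrib)
  hence xs: "x \<in> sphere 0 1" using nXY by (simp add: power2_eq_1_iff[symmetric] ) (smt (verit) norm_ge_zero power2_eq_1_iff)
  have "transpose ?Q *v x = join X (Y *\<^sub>R e)"
    unfolding x_def matrix_vector_mul_assoc using oQ by (simp add: orthogonal_matrix)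
  hence jj: "join (transpose l *v x) (transpose s *v x) = join X (Y *\<^sub>R e)" unfolding tQ .
  have tlx: "transpose l *v x = X"
  proof (rule vec_eq_iff[THEN iffD2, rule_format])
    fix i show "(transpose l *v x) $ i = X $ i"
      using arg_cong[OF jj, of "\<lambda>z. z $ Inl i"] by (simp add: join_def)
  qed
  have "sqrt (1 - (norm X)\<^sup>2) = Y" using nXY Y0 by (simp add: real_sqrt_unique)
  hence hx: "hhat x = g p0" unfolding hhat_def g_def fhat_def XY tlx by simp
  have low: "\<forall>x\<in>cball 0 1. \<rho> \<le> hhat x" using C p0(2) rho by fastforce
  show ?thesis using low xs hx rho sphere_cball by blast
qed

end
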